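(* Fix $\Omega>0$, $\beta>0$ and $x\in\mathbb R$. For $h>0$ put $\xi=e^{\beta h}$, $\omega_0=\Omega/h$, $\Omega_0(h)=\frac{\omega_0}{\xi}|1-\xi|$, $\Omega_D(h)=\frac{\omega_0}{\xi}(1+\xi)$, $\omega_h^2(k)=\frac{\omega_0^2}{\xi^2}\big((\xi-\cos k)^2+\sin^2k\big)$, and $$\mathcal G^{(h)}_n(z)=\frac{1}{2\pi}\int_0^{2\pi}\frac{e^{ikn}}{\omega_h^2(k)-z^2}\,dk$$ for integers $n$ and $z$ with $\omega_h^2(k)\ne z^2$ for all $k$. Let $n(h)$ be integers with $n(h)\,h\to|x|$ as $h\to0^+$. Then: (1) if $0\le\omega<\beta\Omega$, $$\lim_{h\to0^+}\frac1h\,\mathcal G^{(h)}_{n(h)}(\omega)=\frac{1}{2\Omega^2}\,\frac{e^{-|x|\sqrt{\beta^2-\omega^2/\Omega^2}}}{\sqrt{\beta^2-\omega^2/\Omega^2}};$$ (2) if $\omega>\beta\Omega$, $$\lim_{h\to0^+}\frac1h\,\lim_{\epsilon\to0^+}\mathcal G^{(h)}_{n(h)}(\omega+i\epsilon)=\frac{i}{2\Omega^2}\,\frac{e^{i|x|\sqrt{\omega^2/\Omega^2-\beta^2}}}{\sqrt{\omega^2/\Omega^2-\beta^2}}.$$ Moreover these limits $g(|x|,\omega)$ satisfy, in the sense of distributions in $x$, $-\Omega^2\big(\frac{d^2}{dx^2}+\frac{\omega^2}{\Omega^2}-\beta^2\big)g(|x|,\omega)=\delta(x)$.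
   Context: This is the continuum limit of the lattice Green's function of the exponentially graded linear chain (masses $m_0\xi^{2p}$, spring constants $m_0\xi^{2p}\omega_0^2$) with lattice spacing $h$, under the scalings $\xi=e^{\beta h}$, $\omega_0^2=\Omega^2/h^2$, particle position $x=ph$; the continuum equation of motion is $e^{2\beta x}\partial_t^2u=\Omega^2\partial_x(e^{2\beta x}\partial_xu)$, which after $u=e^{-\beta x}y$ becomes the Klein–Gordon equation $\Omega^{-2}\partial_t^2y-\partial_x^2y+\beta^2y=0$. The factor $1/h$ converts matrix multiplication into convolution integrals. For small $h$ one has $\Omega_0(h)\to\beta\Omega$ and $\Omega_D(h)\to\infty$. *)

theory Defs
  imports "HOL-Analysis.Analysis"
begin

definition xi :: "real \<Rightarrow> real \<Rightarrow> real" where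
  "xi \<beta> h = exp (\<beta> * h)"

definition omega0 :: "real \<Rightarrow> real \<Rightarrow> real" where
  "omega0 \<Omega> h = \<Omega> / h"

definition OmegaLow :: "real \<Rightarrow> real \<Rightarrow> real \<Rightarrow> real" where
  "OmegaLow \<Omega> \<beta> h = omega0 \<Omega> h / xi \<beta> h * \<bar>1 - xi \<beta> h\<bar>"

definition OmegaD :: "real \<Rightarrow> real \<Rightarrow> real \<Rightarrow> real" where
  "OmegaD \<Omega> \<beta> h = omega0 \<Omega> h / xi \<beta> h * (1 + xi \<beta> h)"

definition omh2 :: "real \<Rightarrow> real \<Rightarrow> real \<Rightarrow> real \<Rightarrow> real" where
  "omh2 \<Omega> \<beta> h k = (omega0 \<Omega> h)\<^sup>2 / (xi \<beta> h)\<^sup>2 * ((xi \<beta> h - cos k)\<^sup>2 + (sin k)\<^sup>2)"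

text \<open>Lattice Green's function G^(h)_n(z) (meaningful when omh2 never equals z^2).\<close>
definition latG :: "real \<Rightarrow> real \<Rightarrow> real \<Rightarrow> int \<Rightarrow> complex \<Rightarrow> complex" where
  "latG \<Omega> \<beta> h n z =
     (1 / (2 * pi)) * integral {0..2*pi}
        (\<lambda>k. exp (\<i> * of_real k * of_int n) / (of_real (omh2 \<Omega> \<beta> h k) - z\<^sup>2))"

definition test_function :: "(real \<Rightarrow> real) \<Rightarrow> bool" where
  "test_function \<phi> \<longleftrightarrow>
     (\<forall>m x. ((deriv ^^ m) \<phi>) differentiable (at x)) \<and> (\<exists>R. \<forall>x. R < \<bar>x\<bar> \<longrightarrow> \<phi> x = 0)"

definition solves_green_eq :: "real \<Rightarrow> real \<Rightarrow> real \<Rightarrow> (real \<Rightarrow> complex) \<Rightarrow> bool" where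
  "solves_green_eq \<Omega> \<beta> \<omega> G \<longleftrightarrow>
     (\<forall>\<phi>. test_function \<phi> \<longrightarrow>
        ((\<lambda>x. - of_real (\<Omega>\<^sup>2) * G x *
              of_real (deriv (deriv \<phi>) x + (\<omega>\<^sup>2 / \<Omega>\<^sup>2 - \<beta>\<^sup>2) * \<phi> x))
          has_integral of_real (\<phi> 0)) UNIV)"

end

theory Submission
  imports Defs "HOL-Complex_Analysis.Complex_Analysis" "HOL-Real_Asymp.Real_Asymp"
begin


lemma keyint_nat:
  fixes r :: complex and m :: nat
  assumes r0: "r \<noteq> 0" and r1: "norm r < 1"
  shows "((\<lambda>k. exp (\<i> * of_real k * of_nat m) / ((r + 1/r)/2 - of_real (cos k)))
           has_integral (4 * pi * r^(m+1) / (1 - r\<^sup>2))) {0..2*pi}"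
proof -
  define g where "g u = 2 * \<i> * u^m / (u - 1/r)" for u
  have nr: "norm (1/r) > 1" using r0 r1 by (simp add: norm_divide field_simps)
  have hol: "g holomorphic_on ball 0 1" "continuous_on (cball 0 1) g"
  proof -
    have "\<And>u. u \<in> cball 0 1 \<Longrightarrow> u - 1/r \<noteq> 0" using nr by auto
    then show "g holomorphic_on ball 0 1" "continuous_on (cball 0 1) g"
      unfolding g_def by (auto intro!: holomorphic_intros continuous_intros)
  qed
  have "((\<lambda>u. g u / (u - r)) has_contour_integral (2 * of_real pi * \<i> * g r)) (circlepath 0 1)"
    by (rule Cauchy_integral_circlepath[OF hol(2) hol(1)]) (use r1 in simp)
  then have H: "((\<lambda>t. g (exp (2 * of_real pi * \<i> * of_real t)) / (exp (2 * of_real pi * \<i> * of_real t) - r)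
         * (2 * pi * \<i> * exp (2 * of_real pi * \<i> * t))) has_integral (2 * of_real pi * \<i> * g r)) {0..1}"
    unfolding has_contour_integral_def
    by (subst (asm) has_integral_cong[OF arg_cong2[where f="(*)", OF refl vector_derivative_circlepath01]])
       (auto simp: circlepath)
  have rr: "r - 1/r \<noteq> 0" using nr r1 by auto
  have r2: "1 - r\<^sup>2 \<noteq> 0"
  proof
    assume "1 - r\<^sup>2 = 0" then have "norm (r^2) = 1" by (metis eq_iff_diff_eq_0 norm_one)
    then show False using r1 by (simp add: norm_power) (metis abs_norm_cancel abs_square_less_1 less_irrefl)
  qed
  have V: "2 * of_real pi * \<i> * g r = 4 * pi * r^(m+1) / (1 - r\<^sup>2)"
  proof -
    have "2 * of_real pi * \<i> * g r = - 4 * pi * r^m / (r - 1/r)"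
      unfolding g_def by (simp add: algebra_simps)
    also have "r - 1/r = (r\<^sup>2 - 1) / r" using r0 by (simp add: field_simps power2_eq_square)
    also have "- 4 * pi * r^m / ((r\<^sup>2 - 1) / r) = 4 * pi * r^(m+1) / (1 - r\<^sup>2)"
      using r0 r2 by (simp add: field_simps)
    finally show ?thesis .
  qed
  have S: "((\<lambda>x. (\<lambda>t. g (exp (2 * of_real pi * \<i> * of_real t)) / (exp (2 * of_real pi * \<i> * of_real t) - r)
         * (2 * pi * \<i> * exp (2 * of_real pi * \<i> * t))) ((1/(2*pi)) * x)) has_integral (1 / \<bar>1/(2*pi)\<bar>) *\<^sub>R (2 * of_real pi * \<i> * g r)) ((\<lambda>x. x / (1/(2*pi))) ` {0..1})"
    by (rule has_integral_stretch_real[OF H]) simp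
  have img: "((\<lambda>x. x / (1/(2*pi))) ` {0..1}) = {0..2*pi}"
  proof -
    have "((\<lambda>x. x / (1/(2*pi))) ` {0..1}) = (\<lambda>x. (2*pi) * x) ` {0..1}" by (auto simp: mult.commute)
    also have "\<dots> = {0..2*pi}" by (simp add: image_mult_atLeastAtMost)
    finally show ?thesis .
  qed
  have pt: "(\<lambda>t. g (exp (2 * of_real pi * \<i> * of_real t)) / (exp (2 * of_real pi * \<i> * of_real t) - r)
         * (2 * pi * \<i> * exp (2 * of_real pi * \<i> * t))) ((1/(2*pi)) * x)
       = (2*pi) * (exp (\<i> * of_real x * of_nat m) / ((r + 1/r)/2 - of_real (cos x)))" for x
  proof -
    define z where "z = exp (\<i> * of_real x)"
    have e1: "exp (2 * of_real pi * \<i> * of_real ((1/(2*pi)) * x)) = z"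
      unfolding z_def by (simp add: field_simps)
    have e2: "exp (\<i> * of_real x * of_nat m) = z^m"
      unfolding z_def by (metis exp_of_nat_mult mult.commute)
    have nz: "norm z = 1" unfolding z_def by simp
    have z0: "z \<noteq> 0" unfolding z_def by simp
    have zr: "z - r \<noteq> 0" using nz r1 by auto
    have zr': "z - 1/r \<noteq> 0" using nz nr by auto
    have c: "of_real (cos x) = (z + 1/z)/2"
      unfolding z_def by (simp add: cos_of_real[symmetric] cos_exp_eq exp_minus field_simps)
    have d: "(r + 1/r)/2 - (z + 1/z)/2 = - (z - r) * (z - 1/r) / (2*z)"
      using z0 r0 by (simp add: field_simps)
    have dd: "r + r*(z*z) - (z + r*(r*z)) \<noteq> 0"
    proof -
      have "r + r*(z*z) - (z + r*(r*z)) = (r*z - 1)*(z - r)" by (simp add: algebra_simps)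
      moreover have "r*z - 1 \<noteq> 0" using zr' r0 by (auto simp: field_simps)
      ultimately show ?thesis using zr by simp
    qed
    show ?thesis
      unfolding e1 e2 c d g_def using z0 zr zr' r0 dd
      by (simp add: field_simps)
  qed
  have "((\<lambda>x. (2*pi) * (exp (\<i> * of_real x * of_nat m) / ((r + 1/r)/2 - of_real (cos x))))
         has_integral (2*pi) * (4 * pi * r^(m+1) / (1 - r\<^sup>2))) {0..2*pi}"
    using S unfolding img pt V by (simp add: scaleR_conv_of_real)
  then have "((\<lambda>x. (1/(2*pi)) * ((2*pi) * (exp (\<i> * of_real x * of_nat m) / ((r + 1/r)/2 - of_real (cos x)))))
         has_integral (1/(2*pi)) * ((2*pi) * (4 * pi * r^(m+1) / (1 - r\<^sup>2)))) {0..2*pi}"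
    by (rule has_integral_mult_right)
  then show ?thesis by (simp add: mult.assoc mult.left_commute)
qed
lemma keyint:
  fixes r :: complex and n :: int
  assumes r0: "r \<noteq> 0" and r1: "norm r < 1"
  shows "((\<lambda>k. exp (\<i> * of_real k * of_int n) / ((r + 1/r)/2 - of_real (cos k)))
           has_integral (4 * pi * r^(nat \<bar>n\<bar>+1) / (1 - r\<^sup>2))) {0..2*pi}"
proof (cases "n \<ge> 0")
  case True
  then obtain m where "n = int m" by (metis nonneg_eq_int)
  then show ?thesis using keyint_nat[OF r0 r1, of m] by simp
next
  case False
  define m where "m = nat (-n)"
  have nm: "n = - int m" "nat \<bar>n\<bar> = m" using False unfolding m_def by auto
  define F where "F k = exp (\<i> * of_real k * of_nat m) / ((r + 1/r)/2 - of_real (cos k))" for k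
  have "((\<lambda>x. F (-x)) has_integral (4 * pi * r^(m+1) / (1 - r\<^sup>2))) {-(2*pi)..-0}"
    using keyint_nat[OF r0 r1, of m] unfolding F_def[abs_def] by (subst has_integral_reflect_real) simp
  then have "((\<lambda>x. (\<lambda>x. F (-x)) (1 *\<^sub>R x + (-(2*pi)))) has_integral ((4 * pi * r^(m+1) / (1 - r\<^sup>2)) /\<^sub>R 1 ^ DIM(real)))
     (cbox ((-(2*pi) - (-(2*pi))) /\<^sub>R 1) ((-0 - (-(2*pi))) /\<^sub>R 1))"
    by (subst has_integral_affinity_iff) (auto simp: cbox_interval)
  then have I: "((\<lambda>x. F (2*pi - x)) has_integral (4 * pi * r^(m+1) / (1 - r\<^sup>2))) {0..2*pi}"
    by (simp add: cbox_interval)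
  have "F (2*pi - x) = exp (\<i> * of_real x * of_int n) / ((r + 1/r)/2 - of_real (cos x))" for x
  proof -
    have "exp (\<i> * of_real (2*pi - x) * of_nat m) = exp (of_nat m * (2 * pi * \<i>)) * exp (\<i> * of_real x * of_int n)"
    proof -
      have "\<i> * of_real (2*pi - x) * of_nat m = of_nat m * (2 * pi * \<i>) + \<i> * of_real x * of_int n"
        unfolding nm by (simp add: algebra_simps)
      then show ?thesis by (metis exp_add)
    qed
    also have "exp (of_nat m * (2 * pi * \<i>)) = 1"
      by (simp add: exp_of_nat_mult)
    finally show ?thesis unfolding F_def by simp
  qed
  then show ?thesis using I nm by simp
qed



definition Bf :: "real \<Rightarrow> real \<Rightarrow> real \<Rightarrow> real" where
  "Bf \<Omega> \<beta> h = 2*\<Omega>\<^sup>2/(h\<^sup>2*exp(\<beta>*h))"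
definition Wf :: "real \<Rightarrow> real \<Rightarrow> real \<Rightarrow> complex \<Rightarrow> complex" where
  "Wf \<Omega> \<beta> h z = of_real ((exp(\<beta>*h) + 1/exp(\<beta>*h))/2) - z\<^sup>2 * of_real (h\<^sup>2*exp(\<beta>*h)/(2*\<Omega>\<^sup>2))"

lemma omh2_eq:
  assumes "h \<noteq> 0" "\<Omega> \<noteq> 0"
  shows "of_real (omh2 \<Omega> \<beta> h k) - z\<^sup>2 = of_real (Bf \<Omega> \<beta> h) * (Wf \<Omega> \<beta> h z - of_real (cos k))"
proof -
  have E: "exp(\<beta>*h) \<noteq> 0" by simp
  have "omh2 \<Omega> \<beta> h k = Bf \<Omega> \<beta> h * ((exp(\<beta>*h) + 1/exp(\<beta>*h))/2 - cos k)"
  proof -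
    define E where "E = exp(\<beta>*h)"
    have E0: "E > 0" unfolding E_def by simp
    have sc: "(E - cos k)\<^sup>2 + (sin k)\<^sup>2 = E\<^sup>2 - 2*E*cos k + 1"
      using sin_cos_squared_add[of k] by (simp add: power2_diff algebra_simps)
    have "omh2 \<Omega> \<beta> h k = \<Omega>\<^sup>2 * (E\<^sup>2 - 2*E*cos k + 1) / (h\<^sup>2 * E\<^sup>2)"
      unfolding omh2_def omega0_def xi_def E_def[symmetric] sc by (simp add: power_divide)
    also have "\<dots> = 2*\<Omega>\<^sup>2/(h\<^sup>2*E) * ((E + 1/E)/2 - cos k)"
      using E0 assms by (simp add: field_simps power2_eq_square)
    finally show ?thesis unfolding Bf_def E_def .
  qed
  moreover have "of_real (Bf \<Omega> \<beta> h) * of_real (h\<^sup>2*exp(\<beta>*h)/(2*\<Omega>\<^sup>2)) = (1::complex)"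
    unfolding Bf_def using assms by (simp add: field_simps)
  moreover have "of_real (Bf \<Omega> \<beta> h) * (Wf \<Omega> \<beta> h z - of_real (cos k)) =
     of_real (Bf \<Omega> \<beta> h) * (of_real ((exp(\<beta>*h) + 1/exp(\<beta>*h))/2) - of_real (cos k))
       - z\<^sup>2 * (of_real (Bf \<Omega> \<beta> h) * of_real (h\<^sup>2*exp(\<beta>*h)/(2*\<Omega>\<^sup>2)))"
    unfolding Wf_def by (simp add: algebra_simps)
  ultimately show ?thesis by simp
qed

lemma latG_formula:
  assumes h: "h > 0" and O: "\<Omega> > 0" and r0: "r \<noteq> 0" and r1: "norm r < 1"
    and W: "Wf \<Omega> \<beta> h z = (r + 1/r)/2"
  shows "latG \<Omega> \<beta> h n z = 2 * r^(nat \<bar>n\<bar>+1) / (1 - r\<^sup>2) / of_real (Bf \<Omega> \<beta> h)"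
proof -
  have B: "Bf \<Omega> \<beta> h \<noteq> 0" unfolding Bf_def using h O by simp
  have "((\<lambda>k. (1 / of_real (Bf \<Omega> \<beta> h)) * (exp (\<i> * of_real k * of_int n) / ((r + 1/r)/2 - of_real (cos k))))
           has_integral (1 / of_real (Bf \<Omega> \<beta> h)) * (4 * pi * r^(nat \<bar>n\<bar>+1) / (1 - r\<^sup>2))) {0..2*pi}"
    by (rule has_integral_mult_right[OF keyint[OF r0 r1]])
  moreover have "(1 / of_real (Bf \<Omega> \<beta> h)) * (exp (\<i> * of_real k * of_int n) / ((r + 1/r)/2 - of_real (cos k)))
      = exp (\<i> * of_real k * of_int n) / (of_real (omh2 \<Omega> \<beta> h k) - (z)\<^sup>2)" for k
    using omh2_eq[of h \<Omega> \<beta> k z] h O B unfolding W by simp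
  ultimately have "integral {0..2*pi} (\<lambda>k. exp (\<i> * of_real k * of_int n) / (of_real (omh2 \<Omega> \<beta> h k) - z\<^sup>2))
      = (1 / of_real (Bf \<Omega> \<beta> h)) * (4 * pi * r^(nat \<bar>n\<bar>+1) / (1 - r\<^sup>2))"
    by (simp add: integral_unique)
  moreover have "\<And>X::complex. (1 / (2 * of_real pi)) * ((1 / of_real (Bf \<Omega> \<beta> h)) * (4 * of_real pi * X))
      = 2 * X / of_real (Bf \<Omega> \<beta> h)"
    using B by (simp add: field_simps)
  ultimately show ?thesis unfolding latG_def by (simp add: mult.assoc)
qed

lemma root_in:
  fixes W :: complex
  assumes "Im W < 0"
  defines "r \<equiv> W + \<i> * csqrt (1 - W\<^sup>2)"
  shows "r \<noteq> 0" "norm r < 1" "(r + 1/r)/2 = W"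
proof -
  define t where "t = csqrt (1 - W\<^sup>2)"
  have tt: "t\<^sup>2 = 1 - W\<^sup>2" unfolding t_def by simp
  have prod: "r * (W - \<i> * t) = 1" unfolding r_def t_def[symmetric]
    using tt by (simp add: algebra_simps power2_eq_square)
  then show r0: "r \<noteq> 0" by auto
  show "(r + 1/r)/2 = W"
  proof -
    have "1/r = W - \<i> * t" using prod r0 by (simp add: field_simps)
    then show ?thesis unfolding r_def t_def[symmetric] by simp
  qed
  define a where "a = Re W"
  define b where "b = - Im W"
  define p where "p = Re t"
  define q where "q = Im t"
  have b0: "b > 0" using assms b_def by simp
  have e1: "p\<^sup>2 - q\<^sup>2 = 1 - a\<^sup>2 + b\<^sup>2" and e2: "p * q = a * b"
    using arg_cong[OF tt, of Re] arg_cong[OF tt, of Im]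
    unfolding a_def b_def p_def q_def by (simp_all add: power2_eq_square algebra_simps)
  have p0: "p > 0"
  proof -
    have "0 < p \<or> p = 0" using csqrt_principal[of "1 - W\<^sup>2"] unfolding p_def t_def by auto
    moreover have "p \<noteq> 0"
    proof
      assume "p = 0"
      then have "a = 0" using e2 b0 by simp
      then have "- q\<^sup>2 = 1 + b\<^sup>2" using e1 \<open>p = 0\<close> by simp
      moreover have "q\<^sup>2 \<ge> 0" "b\<^sup>2 \<ge> 0" by simp_all
      ultimately show False by linarith
    qed
    ultimately show ?thesis by auto
  qed
  have nr: "(norm r)\<^sup>2 = (a - q)\<^sup>2 + (p - b)\<^sup>2"
    unfolding r_def t_def[symmetric] a_def b_def p_def q_def cmod_power2 by (simp add: algebra_simps power2_eq_square)
  have nr': "(norm (W - \<i> * t))\<^sup>2 = (a + q)\<^sup>2 + (p + b)\<^sup>2"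
    unfolding a_def b_def p_def q_def cmod_power2 by (simp add: algebra_simps power2_eq_square)
  have pr: "(norm r)\<^sup>2 * (norm (W - \<i> * t))\<^sup>2 = 1"
    using arg_cong[OF prod, of "\<lambda>x. (norm x)\<^sup>2"] by (simp add: norm_mult power_mult_distrib)
  have "a * q + b * p > 0"
  proof -
    have "p * (a * q + b * p) = a * a * b + b * p * p" using e2 by (simp add: algebra_simps)
    also have "\<dots> > 0" using b0 p0 by (simp add: add_nonneg_pos)
    finally show ?thesis using p0 by (simp add: zero_less_mult_iff)
  qed
  then have "(norm r)\<^sup>2 < (norm (W - \<i> * t))\<^sup>2" unfolding nr nr' by (simp add: power2_eq_square algebra_simps)
  then have "(norm r)\<^sup>2 < 1" using pr
  proof -
    assume l: "(norm r)\<^sup>2 < (norm (W - \<i> * t))\<^sup>2"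
    show "(norm r)\<^sup>2 < 1"
    proof (rule ccontr)
      assume "\<not> (norm r)\<^sup>2 < 1"
      then have "1 \<le> (norm r)\<^sup>2" by simp
      moreover have "1 < (norm (W - \<i> * t))\<^sup>2" using l \<open>1 \<le> (norm r)\<^sup>2\<close> by linarith
      ultimately have "1 * 1 < (norm r)\<^sup>2 * (norm (W - \<i> * t))\<^sup>2"
        by (intro mult_le_less_imp_less) auto
      then show False using pr by simp
    qed
  qed
  then show "norm r < 1" by (simp add: abs_square_less_1)
qed



lemma nlim_abs:
  fixes nh :: "real \<Rightarrow> int"
  assumes "((\<lambda>h. real_of_int (nh h) * h) \<longlongrightarrow> \<bar>x\<bar>) (at_right 0)"
  shows "((\<lambda>h. real (nat \<bar>nh h\<bar>) * h) \<longlongrightarrow> \<bar>x\<bar>) (at_right 0)"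
proof -
  have "((\<lambda>h. \<bar>real_of_int (nh h) * h\<bar>) \<longlongrightarrow> \<bar>\<bar>x\<bar>\<bar>) (at_right 0)"
    by (rule tendsto_rabs[OF assms])
  moreover have "eventually (\<lambda>h. \<bar>real_of_int (nh h) * h\<bar> = real (nat \<bar>nh h\<bar>) * h) (at_right 0)"
    using eventually_at_right_less[of 0] by eventually_elim (simp add: abs_mult)
  ultimately show ?thesis by (simp add: tendsto_cong)
qed

lemma w_lim1:
  fixes \<beta> \<Omega> \<omega> :: real
  assumes "\<beta> > 0" "\<Omega> > 0"
  shows "((\<lambda>h. ((exp (\<beta>*h) + 1/exp(\<beta>*h))/2 - \<omega>\<^sup>2*(h\<^sup>2*exp(\<beta>*h)/(2*\<Omega>\<^sup>2)) - 1)/h\<^sup>2) \<longlongrightarrow> (\<beta>\<^sup>2 - \<omega>\<^sup>2/\<Omega>\<^sup>2)/2) (at_right 0)"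
proof -
  have "((\<lambda>h. ((exp (\<beta>*h) + 1/exp(\<beta>*h))/2 - \<omega>\<^sup>2*(h\<^sup>2*exp(\<beta>*h)/(2*\<Omega>\<^sup>2)) - 1)/h\<^sup>2) \<longlongrightarrow> \<beta> * \<beta> / 2 - \<omega>\<^sup>2 * inverse (\<Omega>\<^sup>2) / 2) (at_right 0)"
    using assms by real_asymp
  moreover have "\<beta> * \<beta> / 2 - \<omega>\<^sup>2 * inverse (\<Omega>\<^sup>2) / 2 = (\<beta>\<^sup>2 - \<omega>\<^sup>2/\<Omega>\<^sup>2)/2"
    by (simp add: field_simps power2_eq_square)
  ultimately show ?thesis by simp
qed

lemma w_lim0:
  fixes \<beta> \<Omega> \<omega> :: real
  assumes "\<beta> > 0" "\<Omega> > 0"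
  shows "((\<lambda>h. ((exp (\<beta>*h) + 1/exp(\<beta>*h))/2 - \<omega>\<^sup>2*(h\<^sup>2*exp(\<beta>*h)/(2*\<Omega>\<^sup>2)))) \<longlongrightarrow> 1) (at_right 0)"
  using assms by real_asymp

lemma Bh2_lim:
  fixes \<beta> \<Omega> :: real
  assumes "\<beta> > 0" "\<Omega> > 0"
  shows "((\<lambda>h. Bf \<Omega> \<beta> h * h\<^sup>2) \<longlongrightarrow> 2*\<Omega>\<^sup>2) (at_right 0)"
proof -
  have "((\<lambda>h. 2*\<Omega>\<^sup>2/exp(\<beta>*h)) \<longlongrightarrow> 2*\<Omega>\<^sup>2) (at_right 0)" using assms by real_asymp
  moreover have "eventually (\<lambda>h. 2*\<Omega>\<^sup>2/exp(\<beta>*h) = Bf \<Omega> \<beta> h * h\<^sup>2) (at_right 0)"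
    using eventually_at_right_less[of 0] by eventually_elim (simp add: Bf_def field_simps)
  ultimately show ?thesis by (simp add: tendsto_cong)
qed

lemma asinh_lim: "((\<lambda>u. ln (u + sqrt (u\<^sup>2+1)) / u) \<longlongrightarrow> 1) (at_right 0)" by real_asymp

lemma arcsin_lim: "((\<lambda>u. arcsin u / u) \<longlongrightarrow> 1) (at_right 0)"
proof -
  have "DERIV arcsin 0 :> inverse (sqrt (1 - 0\<^sup>2))" by (rule DERIV_arcsin) auto
  then have "((\<lambda>h. (arcsin (0 + h) - arcsin 0) / h) \<longlongrightarrow> 1) (at 0)"
    using DERIV_D by fastforce
  then have "((\<lambda>h. arcsin h / h) \<longlongrightarrow> 1) (at 0)" by simp
  then show ?thesis by (rule tendsto_mono[rotated]) (simp add: at_le)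
qed

lemma case1_value:
  fixes \<Omega> \<beta> \<omega> h w :: real and n :: int
  assumes O: "\<Omega> > 0" and h: "h > 0" and w1: "w > 1"
    and wdef: "w = (exp (\<beta>*h) + 1/exp(\<beta>*h))/2 - \<omega>\<^sup>2*(h\<^sup>2*exp(\<beta>*h)/(2*\<Omega>\<^sup>2))"
  shows "latG \<Omega> \<beta> h n (of_real \<omega>) / of_real h =
    of_real (exp (- (real (nat \<bar>n\<bar>) * ln (sqrt (w\<^sup>2 - 1) + sqrt ((sqrt (w\<^sup>2 - 1))\<^sup>2 + 1))))
       / (Bf \<Omega> \<beta> h * h\<^sup>2 * (sqrt (w\<^sup>2 - 1) / h)))"
proof -
  define u where "u = sqrt (w\<^sup>2 - 1)"
  define N where "N = nat \<bar>n\<bar>"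
  define r where "r = w - u"
  have u0: "u > 0" unfolding u_def using w1 by (simp add: power_gt1)
  have uu: "u\<^sup>2 = w\<^sup>2 - 1" unfolding u_def using w1
    by (simp add: power_gt1 less_imp_le)
  have su: "sqrt (u\<^sup>2 + 1) = w" using uu w1 by simp
  have uw: "u < w"
  proof -
    have "u\<^sup>2 < w\<^sup>2" using uu by simp
    then show ?thesis using w1 u0 by (smt (verit) power_mono)
  qed
  have r0: "r > 0" unfolding r_def using uw by simp
  have r1: "r < 1"
  proof -
    have "(w - 1)\<^sup>2 < u\<^sup>2" using uu w1 by (simp add: power2_eq_square algebra_simps)
    then have "w - 1 < u" using w1 u0 by (smt (verit) power_mono)
    then show ?thesis unfolding r_def by simp
  qed
  have prod: "r * (w + u) = 1" unfolding r_def using uu by (simp add: algebra_simps power2_eq_square)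
  have inv: "1 / r = w + u" using prod r0 by (simp add: field_simps)
  have W: "Wf \<Omega> \<beta> h (of_real \<omega>) = (of_real r + 1 / of_real r)/2"
  proof -
    have "(of_real r + 1 / of_real r)/2 = (of_real ((r + 1/r)/2) :: complex)" by simp
    also have "(r + 1/r)/2 = w" using inv unfolding r_def by simp
    finally show ?thesis unfolding Wf_def wdef by simp
  qed
  have L: "latG \<Omega> \<beta> h n (of_real \<omega>) = 2 * (of_real r)^(N+1) / (1 - (of_real r)\<^sup>2) / of_real (Bf \<Omega> \<beta> h)"
    unfolding N_def by (rule latG_formula[OF h O _ _ W]) (use r0 r1 in auto)
  have B: "Bf \<Omega> \<beta> h > 0" unfolding Bf_def using O h by simp
  have omr: "1 - r\<^sup>2 = 2 * u * r" unfolding r_def using uu by (simp add: algebra_simps power2_eq_square)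
  have rN: "r ^ N = exp (- (real N * ln (u + sqrt (u\<^sup>2 + 1))))"
  proof -
    have "ln (u + sqrt (u\<^sup>2 + 1)) = - ln r" unfolding su using inv r0
      by (metis add.commute ln_inverse inverse_eq_divide)
    then have "exp (- (real N * ln (u + sqrt (u\<^sup>2 + 1)))) = exp (ln r) ^ N"
      by (simp add: exp_of_nat_mult[symmetric])
    then show ?thesis using r0 by simp
  qed
  have E: "(2 * r^(N+1) / (1 - r\<^sup>2) / Bf \<Omega> \<beta> h) / h = r^N / (Bf \<Omega> \<beta> h * h\<^sup>2 * (u / h))"
    unfolding omr using r0 u0 h B by (simp add: field_simps power2_eq_square)
  have "latG \<Omega> \<beta> h n (of_real \<omega>) / of_real h = of_real ((2 * r^(N+1) / (1 - r\<^sup>2) / Bf \<Omega> \<beta> h) / h)"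
    unfolding L by simp
  then have "latG \<Omega> \<beta> h n (of_real \<omega>) / of_real h = of_real (r^N / (Bf \<Omega> \<beta> h * h\<^sup>2 * (u / h)))"
    unfolding E .
  then show ?thesis unfolding N_def[symmetric] u_def[symmetric] rN[symmetric] .
qed

lemma case1:
  fixes \<Omega> \<beta> \<omega> x :: real and nh :: "real \<Rightarrow> int"
  assumes O: "\<Omega> > 0" and b: "\<beta> > 0" and w0: "0 \<le> \<omega>" and wb: "\<omega> < \<beta> * \<Omega>"
    and nlim: "((\<lambda>h. real_of_int (nh h) * h) \<longlongrightarrow> \<bar>x\<bar>) (at_right 0)"
  defines "\<kappa> \<equiv> sqrt (\<beta>\<^sup>2 - \<omega>\<^sup>2 / \<Omega>\<^sup>2)"
  shows "((\<lambda>h. latG \<Omega> \<beta> h (nh h) (of_real \<omega>) / of_real h)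
            \<longlongrightarrow> of_real (1 / (2 * \<Omega>\<^sup>2) * exp (- \<bar>x\<bar> * \<kappa>) / \<kappa>)) (at_right 0)"
proof -
  define w where "w h = (exp (\<beta>*h) + 1/exp(\<beta>*h))/2 - \<omega>\<^sup>2*(h\<^sup>2*exp(\<beta>*h)/(2*\<Omega>\<^sup>2))" for h
  have lt: "\<omega>\<^sup>2 / \<Omega>\<^sup>2 < \<beta>\<^sup>2"
  proof -
    have "\<omega> / \<Omega> < \<beta>" using wb O by (simp add: field_simps)
    then have "(\<omega> / \<Omega>)\<^sup>2 < \<beta>\<^sup>2" using w0 O by (intro power_strict_mono) auto
    then show ?thesis by (simp add: power_divide)
  qed
  have k0: "\<kappa> > 0" unfolding \<kappa>_def using lt by simp
  have k2: "\<kappa>\<^sup>2 = \<beta>\<^sup>2 - \<omega>\<^sup>2 / \<Omega>\<^sup>2" unfolding \<kappa>_def using lt by simp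
  have A1: "((\<lambda>h. (w h - 1)/h\<^sup>2) \<longlongrightarrow> \<kappa>\<^sup>2/2) (at_right 0)"
    unfolding w_def k2 using w_lim1[OF b O] .
  have A0: "(w \<longlongrightarrow> 1) (at_right 0)" unfolding w_def[abs_def] using w_lim0[OF b O] .
  have ev0: "eventually (\<lambda>h. h > 0 \<and> w h > 1) (at_right 0)"
  proof -
    have "eventually (\<lambda>h. (w h - 1)/h\<^sup>2 > 0) (at_right 0)"
      using order_tendstoD(1)[OF A1] k0 by simp
    then show ?thesis using eventually_at_right_less[of 0]
      by eventually_elim (auto simp: zero_less_divide_iff)
  qed
  have ev: "eventually (\<lambda>h. h > 0 \<and> w h > 1 \<and> (w h)\<^sup>2 > 1) (at_right 0)"
    using ev0 by eventually_elim (auto intro: one_less_power)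
  define u where "u h = sqrt ((w h)\<^sup>2 - 1)" for h
  have U1: "((\<lambda>h. u h / h) \<longlongrightarrow> \<kappa>) (at_right 0)"
  proof -
    have "((\<lambda>h. sqrt ((w h - 1)/h\<^sup>2 * (w h + 1))) \<longlongrightarrow> sqrt (\<kappa>\<^sup>2/2 * (1 + 1))) (at_right 0)"
      by (intro tendsto_intros A1 A0)
    moreover have "sqrt (\<kappa>\<^sup>2/2 * (1 + 1)) = \<kappa>" using k0 by simp
    moreover have "eventually (\<lambda>h. sqrt ((w h - 1)/h\<^sup>2 * (w h + 1)) = u h / h) (at_right 0)"
      using ev
    proof eventually_elim
      case (elim h)
      have "(w h - 1)/h\<^sup>2 * (w h + 1) = ((w h)\<^sup>2 - 1) / h\<^sup>2" by (simp add: algebra_simps power2_eq_square)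
      then show ?case unfolding u_def using elim by (simp add: real_sqrt_divide)
    qed
    ultimately show ?thesis by (simp add: tendsto_cong)
  qed
  have U0: "filterlim u (at_right 0) (at_right 0)"
  proof -
    have "((\<lambda>h. u h / h * h) \<longlongrightarrow> \<kappa> * 0) (at_right 0)"
      by (intro tendsto_intros U1)
    moreover have "eventually (\<lambda>h. u h / h * h = u h) (at_right 0)"
      using ev by eventually_elim simp
    ultimately have "(u \<longlongrightarrow> 0) (at_right 0)" by (simp add: tendsto_cong)
    moreover have "eventually (\<lambda>h. u h \<in> {0<..} \<and> u h \<noteq> 0) (at_right 0)"
      using ev by eventually_elim (simp add: u_def)
    ultimately show ?thesis by (simp add: filterlim_at)
  qed
  define l where "l y = ln (y + sqrt (y\<^sup>2+1))" for y
  have L1: "((\<lambda>h. l (u h) / u h) \<longlongrightarrow> 1) (at_right 0)"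
    unfolding l_def using filterlim_compose[OF asinh_lim U0] .
  have L2: "((\<lambda>h. l (u h) / h) \<longlongrightarrow> \<kappa>) (at_right 0)"
  proof -
    have "((\<lambda>h. l (u h) / u h * (u h / h)) \<longlongrightarrow> \<kappa>) (at_right 0)"
      using tendsto_mult[OF L1 U1] by simp
    moreover have "eventually (\<lambda>h. l (u h) / u h * (u h / h) = l (u h) / h) (at_right 0)"
      using ev by eventually_elim (simp add: u_def)
    ultimately show ?thesis by (rule Lim_transform_eventually)
  qed
  have L3: "((\<lambda>h. real (nat \<bar>nh h\<bar>) * l (u h)) \<longlongrightarrow> \<bar>x\<bar> * \<kappa>) (at_right 0)"
  proof -
    have "((\<lambda>h. (real (nat \<bar>nh h\<bar>) * h) * (l (u h) / h)) \<longlongrightarrow> \<bar>x\<bar> * \<kappa>) (at_right 0)"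
      by (intro tendsto_intros L2 nlim_abs[OF nlim])
    moreover have "eventually (\<lambda>h. (real (nat \<bar>nh h\<bar>) * h) * (l (u h) / h) = real (nat \<bar>nh h\<bar>) * l (u h)) (at_right 0)"
      using ev by eventually_elim simp
    ultimately show ?thesis by (simp add: tendsto_cong)
  qed
  have F: "((\<lambda>h. exp (- (real (nat \<bar>nh h\<bar>) * l (u h))) / (Bf \<Omega> \<beta> h * h\<^sup>2 * (u h / h)))
      \<longlongrightarrow> exp (- (\<bar>x\<bar> * \<kappa>)) / (2*\<Omega>\<^sup>2 * \<kappa>)) (at_right 0)"
    by (intro tendsto_intros L3 Bh2_lim[OF b O] U1) (use O k0 in simp)
  have "((\<lambda>h. latG \<Omega> \<beta> h (nh h) (of_real \<omega>) / of_real h)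
      \<longlongrightarrow> of_real (exp (- (\<bar>x\<bar> * \<kappa>)) / (2*\<Omega>\<^sup>2 * \<kappa>))) (at_right 0)"
  proof -
    have "((\<lambda>h. of_real (exp (- (real (nat \<bar>nh h\<bar>) * l (u h))) / (Bf \<Omega> \<beta> h * h\<^sup>2 * (u h / h))) :: complex)
      \<longlongrightarrow> of_real (exp (- (\<bar>x\<bar> * \<kappa>)) / (2*\<Omega>\<^sup>2 * \<kappa>))) (at_right 0)"
      by (rule tendsto_of_real[OF F])
    moreover have "eventually (\<lambda>h. of_real (exp (- (real (nat \<bar>nh h\<bar>) * l (u h))) / (Bf \<Omega> \<beta> h * h\<^sup>2 * (u h / h)))
       = latG \<Omega> \<beta> h (nh h) (of_real \<omega>) / of_real h) (at_right 0)"
      using ev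
    proof eventually_elim
      case (elim h)
      have "latG \<Omega> \<beta> h (nh h) (of_real \<omega>) / of_real h =
         of_real (exp (- (real (nat \<bar>nh h\<bar>) * ln (sqrt ((w h)\<^sup>2 - 1) + sqrt ((sqrt ((w h)\<^sup>2 - 1))\<^sup>2 + 1))))
       / (Bf \<Omega> \<beta> h * h\<^sup>2 * (sqrt ((w h)\<^sup>2 - 1) / h)))"
        by (rule case1_value[OF O _ _ w_def[of h]]) (use elim in auto)
      then show ?case unfolding l_def u_def by (rule sym)
    qed
    ultimately show ?thesis by (rule Lim_transform_eventually)
  qed
  moreover have "exp (- (\<bar>x\<bar> * \<kappa>)) / (2*\<Omega>\<^sup>2 * \<kappa>) = 1 / (2 * \<Omega>\<^sup>2) * exp (- \<bar>x\<bar> * \<kappa>) / \<kappa>"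
    by (simp add: field_simps)
  ultimately show ?thesis by metis
qed



lemma r0_identity:
  fixes c v :: real and N :: nat
  assumes cv: "c\<^sup>2 + v\<^sup>2 = 1" and v0: "v > 0"
  defines "r0 \<equiv> of_real c + \<i> * of_real v"
  shows "1 - r0\<^sup>2 \<noteq> 0" "2 * r0^(N+1) / (1 - r0\<^sup>2) = \<i> * r0^N / of_real v"
proof -
  have e1: "1 - r0\<^sup>2 = 2 * of_real v * (of_real v - \<i> * of_real c)"
    unfolding r0_def using cv by (simp add: complex_eq_iff power2_eq_square algebra_simps)
  have e2: "r0 = \<i> * (of_real v - \<i> * of_real c)"
    unfolding r0_def by (simp add: algebra_simps)
  have nz: "(of_real v - \<i> * of_real c :: complex) \<noteq> 0" using v0 by (simp add: complex_eq_iff)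
  show "1 - r0\<^sup>2 \<noteq> 0" unfolding e1 using nz v0 by simp
  have "2 * r0^(N+1) / (1 - r0\<^sup>2) = r0^N * (2 * r0 / (2 * of_real v * (of_real v - \<i> * of_real c)))"
    unfolding e1 by simp
  also have "2 * r0 / (2 * of_real v * (of_real v - \<i> * of_real c)) = \<i> / of_real v"
    using nz v0 by (subst e2) (simp add: field_simps)
  finally show "2 * r0^(N+1) / (1 - r0\<^sup>2) = \<i> * r0^N / of_real v" by simp
qed

lemma case2_eps:
  fixes \<Omega> \<beta> \<omega> h c :: real and n :: int
  assumes O: "\<Omega> > 0" and h: "h > 0" and om: "\<omega> > 0" and c0: "0 < c" and c1: "c < 1"
    and cdef: "c = (exp (\<beta>*h) + 1/exp(\<beta>*h))/2 - \<omega>\<^sup>2*(h\<^sup>2*exp(\<beta>*h)/(2*\<Omega>\<^sup>2))"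
  shows "((\<lambda>\<epsilon>. latG \<Omega> \<beta> h n (of_real \<omega> + \<i> * of_real \<epsilon>)) \<longlongrightarrow>
           \<i> * cis (real (nat \<bar>n\<bar>) * arcsin (sqrt (1 - c\<^sup>2))) / of_real (Bf \<Omega> \<beta> h * sqrt (1 - c\<^sup>2))) (at_right 0)"
proof -
  define v where "v = sqrt (1 - c\<^sup>2)"
  define \<theta> where "\<theta> = arcsin v"
  define N where "N = nat \<bar>n\<bar>"
  define K where "K = h\<^sup>2*exp(\<beta>*h)/(2*\<Omega>\<^sup>2)"
  define X where "X = (exp (\<beta>*h) + 1/exp(\<beta>*h))/2"
  define B where "B = Bf \<Omega> \<beta> h"
  have B0: "B > 0" unfolding B_def Bf_def using O h by simp
  have K0: "K > 0" unfolding K_def using h O by simp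
  have cX: "c = X - \<omega>\<^sup>2 * K" unfolding cdef X_def K_def by simp
  have c2: "c\<^sup>2 < 1" using c0 c1 by (simp add: abs_square_less_1)
  have v0: "v > 0" unfolding v_def using c2 by simp
  have vv: "v\<^sup>2 = 1 - c\<^sup>2" unfolding v_def using c2 by simp
  have cv: "c\<^sup>2 + v\<^sup>2 = 1" using vv by simp
  have v1: "v \<le> 1" unfolding v_def using c2 by simp
  have cth: "cos \<theta> = c" unfolding \<theta>_def using v0 v1 c0
    by (simp add: cos_arcsin vv)
  have sth: "sin \<theta> = v" unfolding \<theta>_def using v0 v1 by simp
  define r0 where "r0 = of_real c + \<i> * of_real v"
  have r0cis: "r0 = cis \<theta>" unfolding r0_def by (simp add: complex_eq_iff cth sth)
  define W where "W \<epsilon> = Wf \<Omega> \<beta> h (of_real \<omega> + \<i> * of_real \<epsilon>)" for \<epsilon>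
  have Wexp: "W \<epsilon> = of_real X - (of_real \<omega> + \<i> * of_real \<epsilon>)\<^sup>2 * of_real K" for \<epsilon>
    unfolding W_def Wf_def X_def K_def by simp
  have ImW: "Im (W \<epsilon>) < 0" if "\<epsilon> > 0" for \<epsilon>
  proof -
    have "Im (W \<epsilon>) = - (2 * \<omega> * \<epsilon> * K)" unfolding Wexp by (simp add: power2_eq_square)
    then show ?thesis using om that K0 by simp
  qed
  define r where "r \<epsilon> = W \<epsilon> + \<i> * csqrt (1 - (W \<epsilon>)\<^sup>2)" for \<epsilon>
  have eqL: "eventually (\<lambda>\<epsilon>. 2 * r \<epsilon> ^ (N+1) / (1 - (r \<epsilon>)\<^sup>2) / of_real B = latG \<Omega> \<beta> h n (of_real \<omega> + \<i> * of_real \<epsilon>)) (at_right 0)"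
    using eventually_at_right_less[of 0]
  proof eventually_elim
    case (elim \<epsilon>)
    note R = root_in[OF ImW[OF elim]]
    have Rr: "r \<epsilon> \<noteq> 0" "norm (r \<epsilon>) < 1" "(r \<epsilon> + 1 / r \<epsilon>)/2 = W \<epsilon>" using R unfolding r_def by auto
    have "latG \<Omega> \<beta> h n (of_real \<omega> + \<i> * of_real \<epsilon>) = 2 * r \<epsilon> ^ (nat \<bar>n\<bar> + 1) / (1 - (r \<epsilon>)\<^sup>2) / of_real (Bf \<Omega> \<beta> h)"
      by (rule latG_formula[OF h O Rr(1) Rr(2)]) (simp add: Rr(3) W_def)
    then show ?case unfolding N_def B_def by (rule sym)
  qed
  have WL: "(W \<longlongrightarrow> of_real c) (at_right 0)"
  proof -
    have "((\<lambda>\<epsilon>. of_real X - (of_real \<omega> + \<i> * of_real \<epsilon>)\<^sup>2 * of_real K) \<longlongrightarrow>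
        of_real X - (of_real \<omega> + \<i> * of_real 0)\<^sup>2 * (of_real K :: complex)) (at_right (0::real))"
      by (intro tendsto_intros)
    then show ?thesis unfolding Wexp[abs_def] cX by simp
  qed
  have SL: "((\<lambda>\<epsilon>. csqrt (1 - (W \<epsilon>)\<^sup>2)) \<longlongrightarrow> of_real v) (at_right 0)"
  proof -
    have "((\<lambda>\<epsilon>. 1 - (W \<epsilon>)\<^sup>2) \<longlongrightarrow> of_real (1 - c\<^sup>2)) (at_right 0)"
      using tendsto_diff[OF tendsto_const tendsto_power[OF WL, of 2], of 1] by simp
    moreover have "isCont csqrt (of_real (1 - c\<^sup>2))"
      by (rule continuous_at_csqrt) (use c2 in \<open>simp add: complex_nonpos_Reals_iff\<close>)
    ultimately have "((\<lambda>\<epsilon>. csqrt (1 - (W \<epsilon>)\<^sup>2)) \<longlongrightarrow> csqrt (of_real (1 - c\<^sup>2))) (at_right 0)"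
      using isCont_tendsto_compose by blast
    moreover have "csqrt (of_real (1 - c\<^sup>2)) = of_real v" unfolding v_def
      by (rule of_real_sqrt[symmetric]) (use c2 in simp)
    ultimately show ?thesis by simp
  qed
  have RL: "(r \<longlongrightarrow> r0) (at_right 0)"
    unfolding r_def[abs_def] r0_def by (intro tendsto_intros WL SL)
  note rid1 = r0_identity(1)[OF cv v0, folded r0_def]
  note rid2 = r0_identity(2)[OF cv v0, of N, folded r0_def]
  have "((\<lambda>\<epsilon>. 2 * r \<epsilon> ^ (N+1) / (1 - (r \<epsilon>)\<^sup>2) / of_real B) \<longlongrightarrow> 2 * r0 ^ (N+1) / (1 - r0\<^sup>2) / of_real B) (at_right 0)"
    by (intro tendsto_intros RL) (use rid1 B0 in auto)
  then have T: "((\<lambda>\<epsilon>. latG \<Omega> \<beta> h n (of_real \<omega> + \<i> * of_real \<epsilon>)) \<longlongrightarrow> 2 * r0 ^ (N+1) / (1 - r0\<^sup>2) / of_real B) (at_right 0)"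
    using eqL by (rule Lim_transform_eventually)
  have "2 * r0 ^ (N+1) / (1 - r0\<^sup>2) / of_real B = \<i> * cis (real N * \<theta>) / of_real (B * v)"
    unfolding rid2 by (simp add: r0cis Complex.DeMoivre mult.commute)
  then show ?thesis using T unfolding N_def \<theta>_def v_def B_def by simp
qed



lemma case2:
  fixes \<Omega> \<beta> \<omega> x :: real and nh :: "real \<Rightarrow> int"
  assumes O: "\<Omega> > 0" and b: "\<beta> > 0" and wb: "\<omega> > \<beta> * \<Omega>"
    and nlim: "((\<lambda>h. real_of_int (nh h) * h) \<longlongrightarrow> \<bar>x\<bar>) (at_right 0)"
  defines "q \<equiv> sqrt (\<omega>\<^sup>2 / \<Omega>\<^sup>2 - \<beta>\<^sup>2)"
  shows "\<exists>Gp :: real \<Rightarrow> complex.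
            (\<forall>\<^sub>F h in at_right 0.
               ((\<lambda>\<epsilon>. latG \<Omega> \<beta> h (nh h) (of_real \<omega> + \<i> * of_real \<epsilon>)) \<longlongrightarrow> Gp h) (at_right 0))
            \<and> ((\<lambda>h. Gp h / of_real h)
                 \<longlongrightarrow> \<i> / of_real (2 * \<Omega>\<^sup>2) * exp (\<i> * of_real (\<bar>x\<bar> * q)) / of_real q) (at_right 0)"
proof -
  define w where "w h = (exp (\<beta>*h) + 1/exp(\<beta>*h))/2 - \<omega>\<^sup>2*(h\<^sup>2*exp(\<beta>*h)/(2*\<Omega>\<^sup>2))" for h
  have om: "\<omega> > 0" using wb O b by (smt (verit) mult_pos_pos)
  have lt: "\<beta>\<^sup>2 < \<omega>\<^sup>2 / \<Omega>\<^sup>2"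
  proof -
    have "\<beta> < \<omega> / \<Omega>" using wb O by (simp add: field_simps)
    then have "\<beta>\<^sup>2 < (\<omega> / \<Omega>)\<^sup>2" using b by (intro power_strict_mono) auto
    then show ?thesis by (simp add: power_divide)
  qed
  have q0: "q > 0" unfolding q_def using lt by simp
  have q2: "q\<^sup>2 = \<omega>\<^sup>2 / \<Omega>\<^sup>2 - \<beta>\<^sup>2" unfolding q_def using lt by simp
  have A1: "((\<lambda>h. (w h - 1)/h\<^sup>2) \<longlongrightarrow> - (q\<^sup>2/2)) (at_right 0)"
  proof -
    have "(\<beta>\<^sup>2 - \<omega>\<^sup>2/\<Omega>\<^sup>2)/2 = - (q\<^sup>2/2)" unfolding q2 by (simp add: field_simps)
    then show ?thesis unfolding w_def using w_lim1[OF b O, of \<omega>] by simp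
  qed
  have A0: "(w \<longlongrightarrow> 1) (at_right 0)" unfolding w_def[abs_def] using w_lim0[OF b O] .
  have ev: "eventually (\<lambda>h. h > 0 \<and> 0 < w h \<and> w h < 1) (at_right 0)"
  proof -
    have "eventually (\<lambda>h. (w h - 1)/h\<^sup>2 < 0) (at_right 0)"
      using order_tendstoD(2)[OF A1] q0 by simp
    moreover have "eventually (\<lambda>h. 0 < w h) (at_right 0)"
      using order_tendstoD(1)[OF A0] by simp
    ultimately show ?thesis using eventually_at_right_less[of 0]
      by eventually_elim (auto simp: divide_less_0_iff)
  qed
  have ev2: "eventually (\<lambda>h. h > 0 \<and> 0 < w h \<and> w h < 1 \<and> (w h)\<^sup>2 < 1) (at_right 0)"
    using ev
  proof eventually_elim
    case (elim h)
    then have "\<bar>w h\<bar> < 1" by simp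
    then show ?case using elim by (simp add: abs_square_less_1)
  qed
  define v where "v h = sqrt (1 - (w h)\<^sup>2)" for h
  define \<theta> where "\<theta> h = arcsin (v h)" for h
  define Gp where "Gp h = \<i> * cis (real (nat \<bar>nh h\<bar>) * \<theta> h) / of_real (Bf \<Omega> \<beta> h * v h)" for h
  have P1: "\<forall>\<^sub>F h in at_right 0.
               ((\<lambda>\<epsilon>. latG \<Omega> \<beta> h (nh h) (of_real \<omega> + \<i> * of_real \<epsilon>)) \<longlongrightarrow> Gp h) (at_right 0)"
    using ev
  proof eventually_elim
    case (elim h)
    show ?case unfolding Gp_def \<theta>_def v_def
      by (rule case2_eps[OF O _ om _ _ w_def[of h]]) (use elim in auto)
  qed
  have V1: "((\<lambda>h. v h / h) \<longlongrightarrow> q) (at_right 0)"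
  proof -
    have T: "((\<lambda>h. sqrt (- ((w h - 1)/h\<^sup>2) * (w h + 1))) \<longlongrightarrow> sqrt (- (- (q\<^sup>2/2)) * (1 + 1))) (at_right 0)"
      by (intro tendsto_intros A1 A0)
    have Tq: "sqrt (- (- (q\<^sup>2/2)) * (1 + 1)) = q" using q0 by simp
    have E: "eventually (\<lambda>h. sqrt (- ((w h - 1)/h\<^sup>2) * (w h + 1)) = v h / h) (at_right 0)"
      using ev
    proof eventually_elim
      case (elim h)
      have "- ((w h - 1)/h\<^sup>2) * (w h + 1) = (1 - (w h)\<^sup>2) / h\<^sup>2" using elim by (simp add: field_simps power2_eq_square)
      then show ?case unfolding v_def using elim by (simp add: real_sqrt_divide)
    qed
    show ?thesis using Lim_transform_eventually[OF T[unfolded Tq] E] .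
  qed
  have V0: "filterlim v (at_right 0) (at_right 0)"
  proof -
    have "((\<lambda>h. v h / h * h) \<longlongrightarrow> q * 0) (at_right 0)"
      by (intro tendsto_intros V1)
    moreover have "eventually (\<lambda>h. v h / h * h = v h) (at_right 0)"
      using ev by eventually_elim simp
    ultimately have "(v \<longlongrightarrow> 0) (at_right 0)" using Lim_transform_eventually by fastforce
    moreover have "eventually (\<lambda>h. v h \<in> {0<..} \<and> v h \<noteq> 0) (at_right 0)"
      using ev2 by eventually_elim (simp add: v_def)
    ultimately show ?thesis by (simp add: filterlim_at)
  qed
  have TH1: "((\<lambda>h. \<theta> h / v h) \<longlongrightarrow> 1) (at_right 0)"
    unfolding \<theta>_def using filterlim_compose[OF arcsin_lim V0] .
  have TH2: "((\<lambda>h. \<theta> h / h) \<longlongrightarrow> q) (at_right 0)"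
  proof -
    have "((\<lambda>h. \<theta> h / v h * (v h / h)) \<longlongrightarrow> q) (at_right 0)"
      using tendsto_mult[OF TH1 V1] by simp
    moreover have "eventually (\<lambda>h. \<theta> h / v h * (v h / h) = \<theta> h / h) (at_right 0)"
      using ev2 by eventually_elim (simp add: v_def)
    ultimately show ?thesis by (rule Lim_transform_eventually)
  qed
  have TH3: "((\<lambda>h. real (nat \<bar>nh h\<bar>) * \<theta> h) \<longlongrightarrow> \<bar>x\<bar> * q) (at_right 0)"
  proof -
    have "((\<lambda>h. (real (nat \<bar>nh h\<bar>) * h) * (\<theta> h / h)) \<longlongrightarrow> \<bar>x\<bar> * q) (at_right 0)"
      by (intro tendsto_intros TH2 nlim_abs[OF nlim])
    moreover have "eventually (\<lambda>h. (real (nat \<bar>nh h\<bar>) * h) * (\<theta> h / h) = real (nat \<bar>nh h\<bar>) * \<theta> h) (at_right 0)"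
      using ev by eventually_elim simp
    ultimately show ?thesis by (rule Lim_transform_eventually)
  qed
  have F: "((\<lambda>h. \<i> * exp (\<i> * of_real (real (nat \<bar>nh h\<bar>) * \<theta> h)) / of_real (Bf \<Omega> \<beta> h * h\<^sup>2 * (v h / h)))
      \<longlongrightarrow> \<i> * exp (\<i> * of_real (\<bar>x\<bar> * q)) / of_real (2*\<Omega>\<^sup>2 * q)) (at_right 0)"
    by (intro tendsto_intros TH3 Bh2_lim[OF b O] V1) (use O q0 in simp)
  have "eventually (\<lambda>h. \<i> * exp (\<i> * of_real (real (nat \<bar>nh h\<bar>) * \<theta> h)) / of_real (Bf \<Omega> \<beta> h * h\<^sup>2 * (v h / h))
      = Gp h / of_real h) (at_right 0)"
    using ev
  proof eventually_elim
    case (elim h)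
    have "Bf \<Omega> \<beta> h * h\<^sup>2 * (v h / h) = Bf \<Omega> \<beta> h * v h * h" using elim by (simp add: power2_eq_square)
    then show ?case unfolding Gp_def cis_conv_exp by simp
  qed
  with F have P2: "((\<lambda>h. Gp h / of_real h) \<longlongrightarrow> \<i> * exp (\<i> * of_real (\<bar>x\<bar> * q)) / of_real (2*\<Omega>\<^sup>2 * q)) (at_right 0)"
    by (rule Lim_transform_eventually)
  have "\<i> * exp (\<i> * of_real (\<bar>x\<bar> * q)) / of_real (2*\<Omega>\<^sup>2 * q) = \<i> / of_real (2 * \<Omega>\<^sup>2) * exp (\<i> * of_real (\<bar>x\<bar> * q)) / of_real q"
    by simp
  then have P2': "((\<lambda>h. Gp h / of_real h) \<longlongrightarrow> \<i> / of_real (2 * \<Omega>\<^sup>2) * exp (\<i> * of_real (\<bar>x\<bar> * q)) / of_real q) (at_right 0)"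
    using P2 by simp
  show ?thesis using P1 P2' by blast
qed



lemma half_int:
  fixes \<phi> \<phi>' \<phi>'' :: "real \<Rightarrow> real" and l :: complex and a b :: real
  assumes ab: "a \<le> b"
    and d1: "\<And>x. (\<phi> has_real_derivative \<phi>' x) (at x)"
    and d2: "\<And>x. (\<phi>' has_real_derivative \<phi>'' x) (at x)"
  shows "((\<lambda>y. exp (l * of_real y) * (of_real (\<phi>'' y) - l\<^sup>2 * of_real (\<phi> y))) has_integral
     (exp (l * of_real b) * (of_real (\<phi>' b) - l * of_real (\<phi> b)) - exp (l * of_real a) * (of_real (\<phi>' a) - l * of_real (\<phi> a)))) {a..b}"
proof (rule fundamental_theorem_of_calculus[OF ab])
  fix y assume "y \<in> {a..b}"
  have E: "((\<lambda>y. exp (l * of_real y)) has_vector_derivative (l * exp (l * of_real y))) (at y)"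
  proof -
    have "((\<lambda>z. exp (l * z)) has_field_derivative (l * exp (l * of_real y))) (at (of_real y))"
      by (auto intro!: derivative_eq_intros)
    then show ?thesis by (rule has_vector_derivative_real_field)
  qed
  have P: "((\<lambda>y. of_real (\<phi>' y) - l * of_real (\<phi> y)) has_vector_derivative (of_real (\<phi>'' y) - l * of_real (\<phi>' y))) (at y)"
    by (intro has_vector_derivative_diff has_vector_derivative_mult_right has_vector_derivative_of_real d1 d2)
  have "((\<lambda>y. exp (l * of_real y) * (of_real (\<phi>' y) - l * of_real (\<phi> y))) has_vector_derivative
      (exp (l * of_real y) * (of_real (\<phi>'' y) - l * of_real (\<phi>' y)) + l * exp (l * of_real y) * (of_real (\<phi>' y) - l * of_real (\<phi> y)))) (at y)"
    by (rule has_vector_derivative_mult[OF E P])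
  moreover have "exp (l * of_real y) * (of_real (\<phi>'' y) - l * of_real (\<phi>' y)) + l * exp (l * of_real y) * (of_real (\<phi>' y) - l * of_real (\<phi> y))
      = exp (l * of_real y) * (of_real (\<phi>'' y) - l\<^sup>2 * of_real (\<phi> y))"
    by (simp add: algebra_simps power2_eq_square)
  ultimately show "((\<lambda>y. exp (l * of_real y) * (of_real (\<phi>' y) - l * of_real (\<phi> y))) has_vector_derivative
      exp (l * of_real y) * (of_real (\<phi>'' y) - l\<^sup>2 * of_real (\<phi> y))) (at y within {a..b})"
    by (metis has_vector_derivative_at_within)
qed

lemma zero_outside_deriv:
  fixes f :: "real \<Rightarrow> real" and S :: real
  assumes "\<And>x. S < \<bar>x\<bar> \<Longrightarrow> f x = 0" "S < \<bar>x\<bar>"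
  shows "deriv f x = 0"
proof -
  have "((\<lambda>_. 0) has_real_derivative 0) (at x)" by simp
  moreover have "open {x::real. S < \<bar>x\<bar>}"
    by (rule open_Collect_less) (auto intro!: continuous_intros)
  ultimately have "(f has_real_derivative 0) (at x)"
    by (rule has_field_derivative_transform_within_open[where S="{x. S < \<bar>x\<bar>}"])
       (use assms in auto)
  then show ?thesis by (rule DERIV_imp_deriv)
qed

lemma green_dist:
  fixes \<phi> :: "real \<Rightarrow> real" and l C :: complex and a \<Omega> :: real and G :: "real \<Rightarrow> complex"
  assumes tf: "test_function \<phi>"
    and G: "\<And>y. G y = C * exp (l * of_real \<bar>y\<bar>)"
    and la: "of_real a = - l\<^sup>2"
    and Cn: "- of_real (\<Omega>\<^sup>2) * C * (2*l) = 1"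
  shows "((\<lambda>x. - of_real (\<Omega>\<^sup>2) * G x * of_real (deriv (deriv \<phi>) x + a * \<phi> x)) has_integral of_real (\<phi> 0)) UNIV"
proof -
  have dif0: "\<phi> differentiable (at x)" for x using tf unfolding test_function_def
    by (metis funpow_0)
  have dif1: "deriv \<phi> differentiable (at x)" for x using tf unfolding test_function_def
    by (metis One_nat_def funpow_0 funpow_Suc_right o_apply)
  obtain R0 where R0: "\<And>x. R0 < \<bar>x\<bar> \<Longrightarrow> \<phi> x = 0" using tf unfolding test_function_def by blast
  define S where "S = \<bar>R0\<bar>"
  define R where "R = S + 1"
  have R: "R > 0" unfolding R_def S_def by simp
  have z0: "\<phi> x = 0" if "S < \<bar>x\<bar>" for x using R0 that unfolding S_def by simp
  have z1: "deriv \<phi> x = 0" if "S < \<bar>x\<bar>" for x by (rule zero_outside_deriv[OF z0 that])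
  have z2: "deriv (deriv \<phi>) x = 0" if "S < \<bar>x\<bar>" for x by (rule zero_outside_deriv[OF z1 that])
  have d1: "(\<phi> has_real_derivative deriv \<phi> x) (at x)" for x using dif0 DERIV_deriv_iff_real_differentiable by blast
  have d2: "(deriv \<phi> has_real_derivative deriv (deriv \<phi>) x) (at x)" for x using dif1 DERIV_deriv_iff_real_differentiable by blast
  define L where "L y = of_real (deriv (deriv \<phi>) y) - l\<^sup>2 * of_real (\<phi> y)" for y
  define K where "K = - of_real (\<Omega>\<^sup>2) * C"
  define f where "f x = - of_real (\<Omega>\<^sup>2) * G x * of_real (deriv (deriv \<phi>) x + a * \<phi> x)" for x
  have fL: "f x = K * exp (l * of_real \<bar>x\<bar>) * L x" for x
    unfolding f_def K_def L_def G by (simp add: la)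
  have Rz: "deriv \<phi> R = 0" "\<phi> R = 0" "deriv \<phi> (-R) = 0" "\<phi> (-R) = 0"
    using z0 z1 unfolding R_def S_def by auto
  have I1: "((\<lambda>y. exp (l * of_real y) * L y) has_integral (0 - (of_real (deriv \<phi> 0) - l * of_real (\<phi> 0)))) {0..R}"
    using half_int[OF _ d1 d2, of 0 R l] R Rz unfolding L_def by simp
  have I2: "((\<lambda>y. exp ((-l) * of_real y) * L y) has_integral ((of_real (deriv \<phi> 0) + l * of_real (\<phi> 0)) - 0)) {-R..0}"
    using half_int[OF _ d1 d2, of "-R" 0 "-l"] R Rz unfolding L_def by simp
  have J1: "(f has_integral K * (0 - (of_real (deriv \<phi> 0) - l * of_real (\<phi> 0)))) {0..R}"
  proof -
    have "((\<lambda>y. K * (exp (l * of_real y) * L y)) has_integral K * (0 - (of_real (deriv \<phi> 0) - l * of_real (\<phi> 0)))) {0..R}"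
      by (rule has_integral_mult_right[OF I1])
    then show ?thesis by (subst has_integral_cong[where g="\<lambda>y. K * (exp (l * of_real y) * L y)"]) (auto simp: fL)
  qed
  have J2: "(f has_integral K * ((of_real (deriv \<phi> 0) + l * of_real (\<phi> 0)) - 0)) {-R..0}"
  proof -
    have "((\<lambda>y. K * (exp ((-l) * of_real y) * L y)) has_integral K * ((of_real (deriv \<phi> 0) + l * of_real (\<phi> 0)) - 0)) {-R..0}"
      by (rule has_integral_mult_right[OF I2])
    then show ?thesis by (subst has_integral_cong[where g="\<lambda>y. K * (exp ((-l) * of_real y) * L y)"]) (auto simp: fL)
  qed
  have J: "(f has_integral (K * ((of_real (deriv \<phi> 0) + l * of_real (\<phi> 0)) - 0) + K * (0 - (of_real (deriv \<phi> 0) - l * of_real (\<phi> 0))))) {-R..R}"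
    by (rule has_integral_combine[OF _ _ J2 J1]) (use R in auto)
  have val: "K * ((of_real (deriv \<phi> 0) + l * of_real (\<phi> 0)) - 0) + K * (0 - (of_real (deriv \<phi> 0) - l * of_real (\<phi> 0))) = of_real (\<phi> 0)"
  proof -
    have "K * ((of_real (deriv \<phi> 0) + l * of_real (\<phi> 0)) - 0) + K * (0 - (of_real (deriv \<phi> 0) - l * of_real (\<phi> 0)))
       = (- of_real (\<Omega>\<^sup>2) * C * (2*l)) * of_real (\<phi> 0)" unfolding K_def by (simp add: algebra_simps)
    also have "\<dots> = of_real (\<phi> 0)" unfolding Cn by simp
    finally show ?thesis .
  qed
  have "(f has_integral of_real (\<phi> 0)) UNIV"
  proof (rule has_integral_on_superset[OF J[unfolded val]])
    fix x assume "x \<notin> {-R..R}"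
    then have "S < \<bar>x\<bar>" unfolding R_def by auto
    then show "f x = 0" unfolding f_def using z0 z2 by simp
  qed auto
  then show ?thesis unfolding f_def .
qed



theorem mainTheorem5:
  fixes \<Omega> \<beta> x \<omega> :: real and nh :: "real \<Rightarrow> int"
  assumes "\<Omega> > 0" and "\<beta> > 0"
    and "((\<lambda>h. real_of_int (nh h) * h) \<longlongrightarrow> \<bar>x\<bar>) (at_right 0)"
  shows
    "(0 \<le> \<omega> \<and> \<omega> < \<beta> * \<Omega> \<longrightarrow>
       (let \<kappa> = sqrt (\<beta>\<^sup>2 - \<omega>\<^sup>2 / \<Omega>\<^sup>2) in
         ((\<lambda>h. latG \<Omega> \<beta> h (nh h) (of_real \<omega>) / of_real h)
            \<longlongrightarrow> of_real (1 / (2 * \<Omega>\<^sup>2) * exp (- \<bar>x\<bar> * \<kappa>) / \<kappa>)) (at_right 0)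
         \<and> solves_green_eq \<Omega> \<beta> \<omega>
             (\<lambda>y. of_real (1 / (2 * \<Omega>\<^sup>2) * exp (- \<bar>y\<bar> * \<kappa>) / \<kappa>))))
     \<and>
     (\<omega> > \<beta> * \<Omega> \<longrightarrow>
       (let q = sqrt (\<omega>\<^sup>2 / \<Omega>\<^sup>2 - \<beta>\<^sup>2) in
         (\<exists>Gp :: real \<Rightarrow> complex.
            (\<forall>\<^sub>F h in at_right 0.
               ((\<lambda>\<epsilon>. latG \<Omega> \<beta> h (nh h) (of_real \<omega> + \<i> * of_real \<epsilon>)) \<longlongrightarrow> Gp h) (at_right 0))
            \<and> ((\<lambda>h. Gp h / of_real h)
                 \<longlongrightarrow> \<i> / of_real (2 * \<Omega>\<^sup>2) * exp (\<i> * of_real (\<bar>x\<bar> * q)) / of_real q) (at_right 0))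
         \<and> solves_green_eq \<Omega> \<beta> \<omega>
             (\<lambda>y. \<i> / of_real (2 * \<Omega>\<^sup>2) * exp (\<i> * of_real (\<bar>y\<bar> * q)) / of_real q)))"

proof -
  have P1: "(0 \<le> \<omega> \<and> \<omega> < \<beta> * \<Omega> \<longrightarrow>
       (let \<kappa> = sqrt (\<beta>\<^sup>2 - \<omega>\<^sup>2 / \<Omega>\<^sup>2) in
         ((\<lambda>h. latG \<Omega> \<beta> h (nh h) (of_real \<omega>) / of_real h)
            \<longlongrightarrow> of_real (1 / (2 * \<Omega>\<^sup>2) * exp (- \<bar>x\<bar> * \<kappa>) / \<kappa>)) (at_right 0)
         \<and> solves_green_eq \<Omega> \<beta> \<omega>
             (\<lambda>y. of_real (1 / (2 * \<Omega>\<^sup>2) * exp (- \<bar>y\<bar> * \<kappa>) / \<kappa>))))"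
  proof
    assume w: "0 \<le> \<omega> \<and> \<omega> < \<beta> * \<Omega>"
    define \<kappa> where "\<kappa> = sqrt (\<beta>\<^sup>2 - \<omega>\<^sup>2 / \<Omega>\<^sup>2)"
    have lt: "\<omega>\<^sup>2 / \<Omega>\<^sup>2 < \<beta>\<^sup>2"
    proof -
      have "\<omega> / \<Omega> < \<beta>" using w assms(1) by (simp add: field_simps)
      then have "(\<omega> / \<Omega>)\<^sup>2 < \<beta>\<^sup>2" using w assms(1) by (intro power_strict_mono) auto
      then show ?thesis by (simp add: power_divide)
    qed
    have k0: "\<kappa> > 0" unfolding \<kappa>_def using lt by simp
    have k2: "\<kappa>\<^sup>2 = \<beta>\<^sup>2 - \<omega>\<^sup>2 / \<Omega>\<^sup>2" unfolding \<kappa>_def using lt by simp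
    have T: "((\<lambda>h. latG \<Omega> \<beta> h (nh h) (of_real \<omega>) / of_real h)
            \<longlongrightarrow> of_real (1 / (2 * \<Omega>\<^sup>2) * exp (- \<bar>x\<bar> * \<kappa>) / \<kappa>)) (at_right 0)"
      unfolding \<kappa>_def using case1[OF assms(1) assms(2) _ _ assms(3)] w by blast
    have S: "solves_green_eq \<Omega> \<beta> \<omega> (\<lambda>y. of_real (1 / (2 * \<Omega>\<^sup>2) * exp (- \<bar>y\<bar> * \<kappa>) / \<kappa>))"
      unfolding solves_green_eq_def
    proof (intro allI impI)
      fix \<phi> :: "real \<Rightarrow> real" assume tf: "test_function \<phi>"
      show "((\<lambda>x. - of_real (\<Omega>\<^sup>2) * (\<lambda>y. of_real (1 / (2 * \<Omega>\<^sup>2) * exp (- \<bar>y\<bar> * \<kappa>) / \<kappa>)) x *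
              of_real (deriv (deriv \<phi>) x + (\<omega>\<^sup>2 / \<Omega>\<^sup>2 - \<beta>\<^sup>2) * \<phi> x))
          has_integral (of_real (\<phi> 0) :: complex)) UNIV"
      proof (rule green_dist[where G="\<lambda>y. of_real (1 / (2 * \<Omega>\<^sup>2) * exp (- \<bar>y\<bar> * \<kappa>) / \<kappa>)"
            and l="- of_real \<kappa>" and C="of_real (1 / (2 * \<Omega>\<^sup>2 * \<kappa>))"
            and a="\<omega>\<^sup>2 / \<Omega>\<^sup>2 - \<beta>\<^sup>2" and \<Omega>=\<Omega>, OF tf])
        fix y
        show "(of_real (1 / (2 * \<Omega>\<^sup>2) * exp (- \<bar>y\<bar> * \<kappa>) / \<kappa>) :: complex)
           = of_real (1 / (2 * \<Omega>\<^sup>2 * \<kappa>)) * exp ((- of_real \<kappa>) * of_real \<bar>y\<bar>)"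
        proof -
          have "exp ((- of_real \<kappa>) * of_real \<bar>y\<bar>) = (of_real (exp (- \<bar>y\<bar> * \<kappa>)) :: complex)"
            by (simp add: exp_of_real[symmetric] mult.commute)
          then show ?thesis by simp
        qed
      next
        show "(of_real (\<omega>\<^sup>2 / \<Omega>\<^sup>2 - \<beta>\<^sup>2) :: complex) = - (- of_real \<kappa>)\<^sup>2"
          using k2 by (metis minus_diff_eq of_real_minus of_real_power power2_minus)
      next
        show "- of_real (\<Omega>\<^sup>2) * of_real (1 / (2 * \<Omega>\<^sup>2 * \<kappa>)) * (2 * (- of_real \<kappa>)) = (1::complex)"
          using k0 assms(1) by (simp add: field_simps)
      qed
    qed
    show "let \<kappa> = sqrt (\<beta>\<^sup>2 - \<omega>\<^sup>2 / \<Omega>\<^sup>2) in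
         ((\<lambda>h. latG \<Omega> \<beta> h (nh h) (of_real \<omega>) / of_real h)
            \<longlongrightarrow> of_real (1 / (2 * \<Omega>\<^sup>2) * exp (- \<bar>x\<bar> * \<kappa>) / \<kappa>)) (at_right 0)
         \<and> solves_green_eq \<Omega> \<beta> \<omega>
             (\<lambda>y. of_real (1 / (2 * \<Omega>\<^sup>2) * exp (- \<bar>y\<bar> * \<kappa>) / \<kappa>))"
      unfolding Let_def \<kappa>_def[symmetric] using T S by blast
  qed
  have P2: "(\<omega> > \<beta> * \<Omega> \<longrightarrow>
       (let q = sqrt (\<omega>\<^sup>2 / \<Omega>\<^sup>2 - \<beta>\<^sup>2) in
         (\<exists>Gp :: real \<Rightarrow> complex.
            (\<forall>\<^sub>F h in at_right 0.
               ((\<lambda>\<epsilon>. latG \<Omega> \<beta> h (nh h) (of_real \<omega> + \<i> * of_real \<epsilon>)) \<longlongrightarrow> Gp h) (at_right 0))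
            \<and> ((\<lambda>h. Gp h / of_real h)
                 \<longlongrightarrow> \<i> / of_real (2 * \<Omega>\<^sup>2) * exp (\<i> * of_real (\<bar>x\<bar> * q)) / of_real q) (at_right 0))
         \<and> solves_green_eq \<Omega> \<beta> \<omega>
             (\<lambda>y. \<i> / of_real (2 * \<Omega>\<^sup>2) * exp (\<i> * of_real (\<bar>y\<bar> * q)) / of_real q)))"
  proof
    assume w: "\<omega> > \<beta> * \<Omega>"
    define q where "q = sqrt (\<omega>\<^sup>2 / \<Omega>\<^sup>2 - \<beta>\<^sup>2)"
    have lt: "\<beta>\<^sup>2 < \<omega>\<^sup>2 / \<Omega>\<^sup>2"
    proof -
      have "\<beta> < \<omega> / \<Omega>" using w assms(1) by (simp add: field_simps)
      then have "\<beta>\<^sup>2 < (\<omega> / \<Omega>)\<^sup>2" using assms(2) by (intro power_strict_mono) auto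
      then show ?thesis by (simp add: power_divide)
    qed
    have q0: "q > 0" unfolding q_def using lt by simp
    have q2: "q\<^sup>2 = \<omega>\<^sup>2 / \<Omega>\<^sup>2 - \<beta>\<^sup>2" unfolding q_def using lt by simp
    have T: "\<exists>Gp :: real \<Rightarrow> complex.
            (\<forall>\<^sub>F h in at_right 0.
               ((\<lambda>\<epsilon>. latG \<Omega> \<beta> h (nh h) (of_real \<omega> + \<i> * of_real \<epsilon>)) \<longlongrightarrow> Gp h) (at_right 0))
            \<and> ((\<lambda>h. Gp h / of_real h)
                 \<longlongrightarrow> \<i> / of_real (2 * \<Omega>\<^sup>2) * exp (\<i> * of_real (\<bar>x\<bar> * q)) / of_real q) (at_right 0)"
      unfolding q_def by (rule case2[OF assms(1) assms(2) w assms(3)])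
    have S: "solves_green_eq \<Omega> \<beta> \<omega> (\<lambda>y. \<i> / of_real (2 * \<Omega>\<^sup>2) * exp (\<i> * of_real (\<bar>y\<bar> * q)) / of_real q)"
      unfolding solves_green_eq_def
    proof (intro allI impI)
      fix \<phi> :: "real \<Rightarrow> real" assume tf: "test_function \<phi>"
      show "((\<lambda>x. - of_real (\<Omega>\<^sup>2) * (\<lambda>y. \<i> / of_real (2 * \<Omega>\<^sup>2) * exp (\<i> * of_real (\<bar>y\<bar> * q)) / of_real q) x *
              of_real (deriv (deriv \<phi>) x + (\<omega>\<^sup>2 / \<Omega>\<^sup>2 - \<beta>\<^sup>2) * \<phi> x))
          has_integral (of_real (\<phi> 0) :: complex)) UNIV"
      proof (rule green_dist[where G="\<lambda>y. \<i> / of_real (2 * \<Omega>\<^sup>2) * exp (\<i> * of_real (\<bar>y\<bar> * q)) / of_real q"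
            and l="\<i> * of_real q" and C="\<i> / of_real (2 * \<Omega>\<^sup>2 * q)"
            and a="\<omega>\<^sup>2 / \<Omega>\<^sup>2 - \<beta>\<^sup>2" and \<Omega>=\<Omega>, OF tf])
        fix y
        show "\<i> / of_real (2 * \<Omega>\<^sup>2) * exp (\<i> * of_real (\<bar>y\<bar> * q)) / of_real q
           = \<i> / of_real (2 * \<Omega>\<^sup>2 * q) * exp ((\<i> * of_real q) * of_real \<bar>y\<bar>)"
          by (simp add: mult.commute mult.left_commute)
      next
        show "(of_real (\<omega>\<^sup>2 / \<Omega>\<^sup>2 - \<beta>\<^sup>2) :: complex) = - (\<i> * of_real q)\<^sup>2"
        proof -
          have "(of_real (\<omega>\<^sup>2 / \<Omega>\<^sup>2 - \<beta>\<^sup>2) :: complex) = of_real (q\<^sup>2)" by (simp only: q2)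
          also have "\<dots> = - (\<i> * of_real q)\<^sup>2" by (simp add: power_mult_distrib)
          finally show ?thesis .
        qed
      next
        show "- of_real (\<Omega>\<^sup>2) * (\<i> / of_real (2 * \<Omega>\<^sup>2 * q)) * (2 * (\<i> * of_real q)) = (1::complex)"
          using q0 assms(1) by (simp add: field_simps)
      qed
    qed
    show "let q = sqrt (\<omega>\<^sup>2 / \<Omega>\<^sup>2 - \<beta>\<^sup>2) in
         (\<exists>Gp :: real \<Rightarrow> complex.
            (\<forall>\<^sub>F h in at_right 0.
               ((\<lambda>\<epsilon>. latG \<Omega> \<beta> h (nh h) (of_real \<omega> + \<i> * of_real \<epsilon>)) \<longlongrightarrow> Gp h) (at_right 0))
            \<and> ((\<lambda>h. Gp h / of_real h)
                 \<longlongrightarrow> \<i> / of_real (2 * \<Omega>\<^sup>2) * exp (\<i> * of_real (\<bar>x\<bar> * q)) / of_real q) (at_right 0))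
         \<and> solves_green_eq \<Omega> \<beta> \<omega>
             (\<lambda>y. \<i> / of_real (2 * \<Omega>\<^sup>2) * exp (\<i> * of_real (\<bar>y\<bar> * q)) / of_real q)"
      unfolding Let_def q_def[symmetric] using T S by blast
  qed
  show ?thesis using P1 P2 by blast
qed


end
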